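(* Let $(\mathbb{B},\|\cdot\|)$ be a real normed space of finite dimension $\dim(\mathbb{B})$. Let $X_1,\dots,X_n$ be independent $\mathbb{B}$-valued random vectors with $\mathbb{E}X_i=0$ and $\mathbb{E}\|X_i\|^2<\infty$, and $S_n:=\sum_{i=1}^nX_i$. Then $$\mathbb{E}\|S_n\|^2\le \dim(\mathbb{B})\sum_{i=1}^n\mathbb{E}\|X_i\|^2 .$$ *)

theory Defs
  imports "HOL-Probability.Probability"
begin

text \<open>A (real) norm on a real vector space, given explicitly as a function,
  since the norm of the normed space in the paper is arbitrary, whereas the
  built-in norm of a euclidean_space type is the Euclidean one.\<close>
definition is_norm :: "('a::real_vector \<Rightarrow> real) \<Rightarrow> bool" where
  "is_norm N \<longleftrightarrow>
     (\<forall>x. N x = 0 \<longleftrightarrow> x = 0) \<and>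
     (\<forall>x y. N (x + y) \<le> N x + N y) \<and>
     (\<forall>c x. N (c *\<^sub>R x) = \<bar>c\<bar> * N x)"

end

theory Submission
  imports Defs "Jordan_Normal_Form.Determinant"
begin


lemma is_normD:
  assumes "is_norm N"
  shows "N 0 = 0" "\<And>x. N x = 0 \<longleftrightarrow> x = 0" "\<And>x y. N (x + y) \<le> N x + N y"
    "\<And>c x. N (c *\<^sub>R x) = \<bar>c\<bar> * N x" "\<And>x. N (- x) = N x" "\<And>x. N x \<ge> 0"
proof -
  show h: "\<And>c x. N (c *\<^sub>R x) = \<bar>c\<bar> * N x" using assms unfolding is_norm_def by blast
  show "\<And>x. N x = 0 \<longleftrightarrow> x = 0" using assms unfolding is_norm_def by blast
  then show "N 0 = 0" by blast
  show t: "\<And>x y. N (x + y) \<le> N x + N y" using assms unfolding is_norm_def by blast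
  show m: "\<And>x. N (- x) = N x" using h[of "-1"] by simp
  fix x
  have "N (x + - x) \<le> N x + N (-x)" by (rule t)
  then show "N x \<ge> 0" using m[of x] \<open>N 0 = 0\<close> by simp
qed

lemma norm_sum_le:
  assumes "is_norm N" "finite S"
  shows "N (\<Sum>i\<in>S. f i) \<le> (\<Sum>i\<in>S. N (f i))"
  using assms(2)
proof (induction S rule: finite_induct)
  case empty then show ?case using is_normD(1)[OF assms(1)] by simp
next
  case (insert x F)
  then show ?case using is_normD(3)[OF assms(1), of "f x" "sum f F"] by simp
qed

lemma norm_upper:
  fixes N :: "'a::euclidean_space \<Rightarrow> real"
  assumes "is_norm N"
  shows "N x \<le> (\<Sum>b\<in>Basis. N b) * norm x"
proof -
  have "N x = N (\<Sum>b\<in>Basis. (x \<bullet> b) *\<^sub>R b)" by (simp add: euclidean_representation)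
  also have "\<dots> \<le> (\<Sum>b\<in>Basis. N ((x \<bullet> b) *\<^sub>R b))" by (rule norm_sum_le[OF assms]) simp
  also have "\<dots> = (\<Sum>b\<in>Basis. \<bar>x \<bullet> b\<bar> * N b)" using is_normD(4)[OF assms] by simp
  also have "\<dots> \<le> (\<Sum>b\<in>Basis. norm x * N b)"
    by (intro sum_mono mult_right_mono) (auto simp: Basis_le_norm is_normD(6)[OF assms])
  finally show ?thesis by (simp add: sum_distrib_left mult.commute)
qed

lemma norm_lipschitz:
  assumes "is_norm N"
  shows "\<bar>N x - N y\<bar> \<le> N (x - y)"
proof -
  have "N x \<le> N (x - y) + N y" using is_normD(3)[OF assms, of "x - y" y] by simp
  moreover have "N y \<le> N (y - x) + N x" using is_normD(3)[OF assms, of "y - x" x] by simp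
  moreover have "N (y - x) = N (x - y)" using is_normD(5)[OF assms, of "x - y"] by simp
  ultimately show ?thesis by linarith
qed

lemma norm_continuous:
  fixes N :: "'a::euclidean_space \<Rightarrow> real"
  assumes "is_norm N"
  shows "continuous_on UNIV N"
proof -
  let ?C = "(\<Sum>b\<in>Basis. N b) + 1"
  have C: "?C > 0" using is_normD(6)[OF assms] by (simp add: add_nonneg_pos sum_nonneg)
  have "\<And>x y. dist (N x) (N y) \<le> ?C * dist x y"
  proof -
    fix x y :: 'a
    have "dist (N x) (N y) \<le> N (x - y)" using norm_lipschitz[OF assms] by (simp add: dist_real_def)
    also have "\<dots> \<le> (\<Sum>b\<in>Basis. N b) * norm (x - y)" by (rule norm_upper[OF assms])
    also have "\<dots> \<le> ?C * dist x y" by (simp add: dist_norm mult_right_mono)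
    finally show "dist (N x) (N y) \<le> ?C * dist x y" .
  qed
  then show ?thesis
    by (intro lipschitz_on_continuous_on[OF lipschitz_onI]) (auto simp: C less_imp_le)
qed

lemma norm_lower:
  fixes N :: "'a::euclidean_space \<Rightarrow> real"
  assumes "is_norm N"
  obtains c where "c > 0" "\<And>x. c * norm x \<le> N x"
proof -
  let ?S = "sphere (0::'a) 1"
  have ne: "?S \<noteq> {}"
  proof -
    obtain b :: 'a where "b \<in> Basis" using nonempty_Basis by blast
    then show ?thesis by (auto intro!: exI[of _ b])
  qed
  obtain x0 where x0: "x0 \<in> ?S" "\<And>y. y \<in> ?S \<Longrightarrow> N x0 \<le> N y"
    using continuous_attains_inf[OF compact_sphere ne continuous_on_subset[OF norm_continuous[OF assms]]]
    by blast
  have pos: "N x0 > 0" using x0(1) is_normD(2,6)[OF assms, of x0] by force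
  show ?thesis
  proof (rule that[OF pos])
    fix x :: 'a
    show "N x0 * norm x \<le> N x"
    proof (cases "x = 0")
      case True then show ?thesis using is_normD(1)[OF assms] by simp
    next
      case False
      have "N x0 \<le> N ((1 / norm x) *\<^sub>R x)" using False by (intro x0(2)) auto
      also have "\<dots> = N x / norm x" using is_normD(4)[OF assms] by simp
      finally show ?thesis using False by (simp add: field_simps)
    qed
  qed
qed



lemma (in prob_space) sq_integrable_imp_integrable:
  fixes Z :: "'a \<Rightarrow> real"
  assumes "Z \<in> borel_measurable M" "integrable M (\<lambda>\<omega>. (Z \<omega>)\<^sup>2)"
  shows "integrable M Z"
proof (rule Bochner_Integration.integrable_bound[of _ "\<lambda>\<omega>. 1 + (Z \<omega>)\<^sup>2"])
  show "integrable M (\<lambda>\<omega>. 1 + (Z \<omega>)\<^sup>2)" using assms(2) by simp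
  show "Z \<in> borel_measurable M" by fact
  show "AE \<omega> in M. norm (Z \<omega>) \<le> norm (1 + (Z \<omega>)\<^sup>2)"
  proof (rule AE_I2)
    fix \<omega>
    have "0 \<le> (\<bar>Z \<omega>\<bar> - 1)\<^sup>2" by simp
    then have "2 * \<bar>Z \<omega>\<bar> \<le> (Z \<omega>)\<^sup>2 + 1" by (simp add: power2_diff power2_abs)
    then have "\<bar>Z \<omega>\<bar> \<le> 1 + (Z \<omega>)\<^sup>2" using zero_le_power2[of "Z \<omega>"] abs_ge_zero[of "Z \<omega>"] by linarith
    then show "norm (Z \<omega>) \<le> norm (1 + (Z \<omega>)\<^sup>2)" by simp
  qed
qed

lemma (in prob_space) prod_integrable:
  fixes Z W :: "'a \<Rightarrow> real"
  assumes "Z \<in> borel_measurable M" "integrable M (\<lambda>\<omega>. (Z \<omega>)\<^sup>2)"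
    "W \<in> borel_measurable M" "integrable M (\<lambda>\<omega>. (W \<omega>)\<^sup>2)"
  shows "integrable M (\<lambda>\<omega>. Z \<omega> * W \<omega>)"
proof (rule Bochner_Integration.integrable_bound[of _ "\<lambda>\<omega>. (Z \<omega>)\<^sup>2 + (W \<omega>)\<^sup>2"])
  show "integrable M (\<lambda>\<omega>. (Z \<omega>)\<^sup>2 + (W \<omega>)\<^sup>2)" using assms by simp
  show "(\<lambda>\<omega>. Z \<omega> * W \<omega>) \<in> borel_measurable M" using assms by simp
  show "AE \<omega> in M. norm (Z \<omega> * W \<omega>) \<le> norm ((Z \<omega>)\<^sup>2 + (W \<omega>)\<^sup>2)"
  proof (rule AE_I2)
    fix \<omega>
    have "2 * \<bar>Z \<omega> * W \<omega>\<bar> \<le> (Z \<omega>)\<^sup>2 + (W \<omega>)\<^sup>2"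
      using sum_squares_bound[of "\<bar>Z \<omega>\<bar>" "\<bar>W \<omega>\<bar>"] by (simp add: abs_mult)
    then show "norm (Z \<omega> * W \<omega>) \<le> norm ((Z \<omega>)\<^sup>2 + (W \<omega>)\<^sup>2)" by simp
  qed
qed

lemma (in prob_space) indep_pair:
  assumes ind: "indep_vars (\<lambda>_. borel) Z I" and ij: "i \<in> I" "j \<in> I" "i \<noteq> j"
  shows "indep_var borel (Z i) borel (Z j)"
proof -
  have "indep_var (PiM {i} (\<lambda>_. borel)) (\<lambda>\<omega>. \<lambda>k\<in>{i}. Z k \<omega>) (PiM {j} (\<lambda>_. borel)) (\<lambda>\<omega>. \<lambda>k\<in>{j}. Z k \<omega>)"
    using ij by (intro indep_var_restrict[OF ind]) auto
  then have "indep_var borel ((\<lambda>f. f i) \<circ> (\<lambda>\<omega>. \<lambda>k\<in>{i}. Z k \<omega>)) borel ((\<lambda>f. f j) \<circ> (\<lambda>\<omega>. \<lambda>k\<in>{j}. Z k \<omega>))"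
    by (rule indep_var_compose) (simp_all add: measurable_component_singleton)
  then show ?thesis by (simp add: comp_def)
qed

lemma (in prob_space) var_sum:
  fixes Z :: "nat \<Rightarrow> 'a \<Rightarrow> real"
  assumes fin: "finite I" and ind: "indep_vars (\<lambda>_. borel) Z I"
    and meas: "\<And>i. i \<in> I \<Longrightarrow> Z i \<in> borel_measurable M"
    and sq: "\<And>i. i \<in> I \<Longrightarrow> integrable M (\<lambda>\<omega>. (Z i \<omega>)\<^sup>2)"
    and mean: "\<And>i. i \<in> I \<Longrightarrow> (\<integral>\<omega>. Z i \<omega> \<partial>M) = 0"
  shows "integrable M (\<lambda>\<omega>. (\<Sum>i\<in>I. Z i \<omega>)\<^sup>2)"
    "(\<integral>\<omega>. (\<Sum>i\<in>I. Z i \<omega>)\<^sup>2 \<partial>M) = (\<Sum>i\<in>I. \<integral>\<omega>. (Z i \<omega>)\<^sup>2 \<partial>M)"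
proof -
  have exp: "(\<Sum>i\<in>I. Z i \<omega>)\<^sup>2 = (\<Sum>i\<in>I. \<Sum>j\<in>I. Z i \<omega> * Z j \<omega>)" for \<omega>
    by (simp add: power2_eq_square sum_product)
  have pint: "integrable M (\<lambda>\<omega>. Z i \<omega> * Z j \<omega>)" if "i \<in> I" "j \<in> I" for i j
    using that by (intro prod_integrable meas sq)
  show "integrable M (\<lambda>\<omega>. (\<Sum>i\<in>I. Z i \<omega>)\<^sup>2)"
    unfolding exp by (intro Bochner_Integration.integrable_sum pint)
  have cross: "(\<integral>\<omega>. Z i \<omega> * Z j \<omega> \<partial>M) = (if i = j then \<integral>\<omega>. (Z i \<omega>)\<^sup>2 \<partial>M else 0)"
    if "i \<in> I" "j \<in> I" for i j
  proof (cases "i = j")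
    case True then show ?thesis by (simp add: power2_eq_square)
  next
    case False
    have "(\<integral>\<omega>. Z i \<omega> * Z j \<omega> \<partial>M) = (\<integral>\<omega>. Z i \<omega> \<partial>M) * (\<integral>\<omega>. Z j \<omega> \<partial>M)"
      using that False
      by (intro indep_var_lebesgue_integral indep_pair[OF ind]
          sq_integrable_imp_integrable[OF meas sq] ) auto
    then show ?thesis using False mean that by simp
  qed
  have "(\<integral>\<omega>. (\<Sum>i\<in>I. Z i \<omega>)\<^sup>2 \<partial>M) = (\<Sum>i\<in>I. \<Sum>j\<in>I. \<integral>\<omega>. Z i \<omega> * Z j \<omega> \<partial>M)"
    unfolding exp
    by (simp add: Bochner_Integration.integral_sum Bochner_Integration.integrable_sum pint)
  also have "\<dots> = (\<Sum>i\<in>I. \<Sum>j\<in>I. if i = j then \<integral>\<omega>. (Z i \<omega>)\<^sup>2 \<partial>M else 0)"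
    by (intro sum.cong refl) (simp add: cross)
  also have "\<dots> = (\<Sum>i\<in>I. \<integral>\<omega>. (Z i \<omega>)\<^sup>2 \<partial>M)"
    using fin by (simp add: sum.delta)
  finally show "(\<integral>\<omega>. (\<Sum>i\<in>I. Z i \<omega>)\<^sup>2 \<partial>M) = (\<Sum>i\<in>I. \<integral>\<omega>. (Z i \<omega>)\<^sup>2 \<partial>M)" .
qed



lemma reduction:
  fixes M :: "'b measure"
    and N :: "'a::euclidean_space \<Rightarrow> real"
    and X :: "nat \<Rightarrow> 'b \<Rightarrow> 'a"
    and A :: "'a \<Rightarrow> 'a"
  assumes P: "prob_space M"
    and nN: "is_norm N"
    and meas: "\<And>i. i \<in> {1..n} \<Longrightarrow> X i \<in> borel_measurable M"
    and ind: "prob_space.indep_vars M (\<lambda>_. borel) X {1..n}"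
    and int: "\<And>i. i \<in> {1..n} \<Longrightarrow> integrable M (X i)"
    and mean: "\<And>i. i \<in> {1..n} \<Longrightarrow> (\<integral>\<omega>. X i \<omega> \<partial>M) = 0"
    and sq: "\<And>i. i \<in> {1..n} \<Longrightarrow> integrable M (\<lambda>\<omega>. (N (X i \<omega>))\<^sup>2)"
    and lin: "linear A"
    and lo: "\<And>x. N x \<le> norm (A x)"
    and up: "\<And>x. norm (A x) \<le> sqrt (real DIM('a)) * N x"
  shows "(\<integral>\<omega>. (N (\<Sum>i=1..n. X i \<omega>))\<^sup>2 \<partial>M)
           \<le> real DIM('a) * (\<Sum>i=1..n. \<integral>\<omega>. (N (X i \<omega>))\<^sup>2 \<partial>M)"
proof -
  interpret prob_space M by fact
  let ?I = "{1..n}"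
  let ?d = "real DIM('a)"
  define Z where "Z b i \<omega> = A (X i \<omega>) \<bullet> b" for b :: 'a and i \<omega>
  have blA: "bounded_linear A" using lin linear_conv_bounded_linear by blast
  have bl: "bounded_linear (\<lambda>x. A x \<bullet> b)" for b :: 'a
    using bounded_linear_compose[OF bounded_linear_inner_left blA] by simp
  have contA: "continuous_on UNIV A" using blA linear_continuous_on by blast
  have contf: "continuous_on UNIV (\<lambda>x. A x \<bullet> b)" for b :: 'a
    using bl linear_continuous_on by blast
  have measf: "(\<lambda>x. A x \<bullet> b) \<in> borel_measurable borel" for b :: 'a
    by (rule borel_measurable_continuous_onI[OF contf])
  have measA: "A \<in> borel_measurable borel" by (rule borel_measurable_continuous_onI[OF contA])
  have measN: "N \<in> borel_measurable borel"
    by (rule borel_measurable_continuous_onI[OF norm_continuous[OF nN]])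
  have AXsq: "(norm (A x))\<^sup>2 \<le> ?d * (N x)\<^sup>2" for x
  proof -
    have "(norm (A x))\<^sup>2 \<le> (sqrt ?d * N x)\<^sup>2"
      by (rule power_mono[OF up]) simp
    also have "\<dots> = ?d * (N x)\<^sup>2" by (simp add: power_mult_distrib)
    finally show ?thesis .
  qed
  have intAX: "integrable M (\<lambda>\<omega>. (norm (A (X i \<omega>)))\<^sup>2)" if "i \<in> ?I" for i
  proof (rule Bochner_Integration.integrable_bound[of _ "\<lambda>\<omega>. ?d * (N (X i \<omega>))\<^sup>2"])
    show "integrable M (\<lambda>\<omega>. ?d * (N (X i \<omega>))\<^sup>2)" using sq[OF that] by simp
    show "(\<lambda>\<omega>. (norm (A (X i \<omega>)))\<^sup>2) \<in> borel_measurable M"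
      using measurable_compose[OF meas[OF that] measA] by simp
    show "AE \<omega> in M. norm ((norm (A (X i \<omega>)))\<^sup>2) \<le> norm (?d * (N (X i \<omega>))\<^sup>2)"
      using AXsq by simp
  qed
  have Zmeas: "Z b i \<in> borel_measurable M" if "i \<in> ?I" for b i
    unfolding Z_def using measurable_compose[OF meas[OF that] measf] by simp
  have Zsq: "integrable M (\<lambda>\<omega>. (Z b i \<omega>)\<^sup>2)" if "i \<in> ?I" "b \<in> Basis" for b i
  proof (rule Bochner_Integration.integrable_bound[OF intAX[OF that(1)]])
    show "(\<lambda>\<omega>. (Z b i \<omega>)\<^sup>2) \<in> borel_measurable M" using Zmeas[OF that(1)] by simp
    show "AE \<omega> in M. norm ((Z b i \<omega>)\<^sup>2) \<le> norm ((norm (A (X i \<omega>)))\<^sup>2)"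
    proof (rule AE_I2)
      fix \<omega>
      have "\<bar>Z b i \<omega>\<bar> \<le> norm (A (X i \<omega>))" unfolding Z_def using Basis_le_norm[OF that(2)] by simp
      then have "(Z b i \<omega>)\<^sup>2 \<le> (norm (A (X i \<omega>)))\<^sup>2"
        by (metis abs_ge_zero order_trans power2_abs power_mono)
      then show "norm ((Z b i \<omega>)\<^sup>2) \<le> norm ((norm (A (X i \<omega>)))\<^sup>2)" by simp
    qed
  qed
  have Zind: "indep_vars (\<lambda>_. borel) (Z b) ?I" for b
  proof -
    have "indep_vars (\<lambda>_. borel) (\<lambda>i. (\<lambda>x. A x \<bullet> b) \<circ> X i) ?I"
      by (rule indep_vars_compose[OF ind]) (simp add: measf)
    then show ?thesis unfolding Z_def comp_def by simp
  qed
  have Zmean: "(\<integral>\<omega>. Z b i \<omega> \<partial>M) = 0" if "i \<in> ?I" for b i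
    unfolding Z_def using integral_bounded_linear[OF bl int[OF that], of b] mean[OF that]
    by (simp add: linear_0[OF lin])
  have normsq: "(norm v)\<^sup>2 = (\<Sum>b\<in>Basis. (v \<bullet> b)\<^sup>2)" for v :: 'a
    unfolding power2_norm_eq_inner by (subst euclidean_inner) (simp add: power2_eq_square)
  have AS: "(norm (A (\<Sum>i\<in>?I. X i \<omega>)))\<^sup>2 = (\<Sum>b\<in>Basis. (\<Sum>i\<in>?I. Z b i \<omega>)\<^sup>2)" for \<omega>
    unfolding normsq Z_def by (simp add: linear_sum[OF lin] inner_sum_left)
  have AXi: "(norm (A (X i \<omega>)))\<^sup>2 = (\<Sum>b\<in>Basis. (Z b i \<omega>)\<^sup>2)" for i \<omega>
    unfolding normsq Z_def by simp
  have vs1: "integrable M (\<lambda>\<omega>. (\<Sum>i\<in>?I. Z b i \<omega>)\<^sup>2)" if "b \<in> Basis" for b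
    using that by (intro var_sum(1)[OF _ Zind Zmeas Zsq Zmean]) auto
  have vs2: "(\<integral>\<omega>. (\<Sum>i\<in>?I. Z b i \<omega>)\<^sup>2 \<partial>M) = (\<Sum>i\<in>?I. \<integral>\<omega>. (Z b i \<omega>)\<^sup>2 \<partial>M)" if "b \<in> Basis" for b
    using that by (intro var_sum(2)[OF _ Zind Zmeas Zsq Zmean]) auto
  have intAS: "integrable M (\<lambda>\<omega>. (norm (A (\<Sum>i\<in>?I. X i \<omega>)))\<^sup>2)"
    unfolding AS by (intro Bochner_Integration.integrable_sum vs1)
  have measS: "(\<lambda>\<omega>. \<Sum>i\<in>?I. X i \<omega>) \<in> borel_measurable M"
    using meas by (intro borel_measurable_sum) auto
  have intNS: "integrable M (\<lambda>\<omega>. (N (\<Sum>i\<in>?I. X i \<omega>))\<^sup>2)"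
  proof (rule Bochner_Integration.integrable_bound[OF intAS])
    show "(\<lambda>\<omega>. (N (\<Sum>i\<in>?I. X i \<omega>))\<^sup>2) \<in> borel_measurable M"
      using measurable_compose[OF measS measN] by simp
    show "AE \<omega> in M. norm ((N (\<Sum>i\<in>?I. X i \<omega>))\<^sup>2) \<le> norm ((norm (A (\<Sum>i\<in>?I. X i \<omega>)))\<^sup>2)"
      using lo is_normD(6)[OF nN] by (auto intro!: power_mono)
  qed
  have "(\<integral>\<omega>. (N (\<Sum>i\<in>?I. X i \<omega>))\<^sup>2 \<partial>M) \<le> (\<integral>\<omega>. (norm (A (\<Sum>i\<in>?I. X i \<omega>)))\<^sup>2 \<partial>M)"
    using intNS intAS lo is_normD(6)[OF nN] by (intro integral_mono) (auto intro!: power_mono)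
  also have "\<dots> = (\<Sum>b\<in>Basis. \<integral>\<omega>. (\<Sum>i\<in>?I. Z b i \<omega>)\<^sup>2 \<partial>M)"
    unfolding AS by (intro Bochner_Integration.integral_sum vs1)
  also have "\<dots> = (\<Sum>b\<in>Basis. \<Sum>i\<in>?I. \<integral>\<omega>. (Z b i \<omega>)\<^sup>2 \<partial>M)"
    by (intro sum.cong refl vs2)
  also have "\<dots> = (\<Sum>i\<in>?I. \<Sum>b\<in>Basis. \<integral>\<omega>. (Z b i \<omega>)\<^sup>2 \<partial>M)"
    by (rule sum.swap)
  also have "\<dots> = (\<Sum>i\<in>?I. \<integral>\<omega>. (norm (A (X i \<omega>)))\<^sup>2 \<partial>M)"
    unfolding AXi by (intro sum.cong refl Bochner_Integration.integral_sum[symmetric] Zsq) auto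
  also have "\<dots> \<le> (\<Sum>i\<in>?I. \<integral>\<omega>. ?d * (N (X i \<omega>))\<^sup>2 \<partial>M)"
    using intAX sq AXsq by (intro sum_mono integral_mono) auto
  also have "\<dots> = ?d * (\<Sum>i\<in>?I. \<integral>\<omega>. (N (X i \<omega>))\<^sup>2 \<partial>M)"
    by (simp add: sum_distrib_left)
  finally show ?thesis .
qed



definition bl :: "'a::euclidean_space list" where
  "bl = (SOME xs. set xs = Basis \<and> distinct xs)"

lemma bl: "set (bl::'a::euclidean_space list) = Basis" "distinct (bl::'a list)"
  "length (bl::'a list) = DIM('a)"
proof -
  have "\<exists>xs. set xs = (Basis::'a set) \<and> distinct xs" by (rule finite_distinct_list) simp
  then have *: "set (bl::'a list) = Basis \<and> distinct (bl::'a list)"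
    unfolding bl_def by (rule someI_ex)
  then show "set (bl::'a list) = Basis" "distinct (bl::'a list)" by auto
  then show "length (bl::'a list) = DIM('a)" using distinct_card by metis
qed

definition ee :: "nat \<Rightarrow> 'a::euclidean_space" where "ee i = bl ! i"

lemma ee_Basis: "i < DIM('a) \<Longrightarrow> (ee i :: 'a::euclidean_space) \<in> Basis"
  unfolding ee_def using bl by (metis nth_mem)

lemma ee_inner: "i < DIM('a) \<Longrightarrow> j < DIM('a) \<Longrightarrow>
    (ee i :: 'a::euclidean_space) \<bullet> ee j = (if i = j then 1 else 0)"
proof -
  assume ij: "i < DIM('a)" "j < DIM('a)"
  have "(ee i = (ee j :: 'a)) = (i = j)"
    unfolding ee_def using bl(2,3)[where 'a='a] ij by (simp add: nth_eq_iff_index_eq)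
  then show ?thesis using ee_Basis[OF ij(1)] ee_Basis[OF ij(2)] by (auto simp: inner_Basis)
qed

lemma ee_bij: "bij_betw (ee :: nat \<Rightarrow> 'a::euclidean_space) {0..<DIM('a)} Basis"
proof -
  have "bij_betw ((!) (bl::'a list)) {..<length (bl::'a list)} (set bl)"
    by (rule bij_betw_nth) (auto simp: bl)
  then show ?thesis unfolding ee_def[abs_def] using bl[where 'a='a] by (simp add: lessThan_atLeast0)
qed

lemma ee_repr: "(x::'a::euclidean_space) = (\<Sum>k=0..<DIM('a). (x \<bullet> ee k) *\<^sub>R ee k)"
proof -
  have "(\<Sum>k=0..<DIM('a). (x \<bullet> ee k) *\<^sub>R ee k) = (\<Sum>b\<in>Basis. (x \<bullet> b) *\<^sub>R b)"
    using sum.reindex_bij_betw[OF ee_bij, of "\<lambda>b. (x \<bullet> b) *\<^sub>R b"] by simp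
  then show ?thesis by (simp add: euclidean_representation)
qed

definition matF :: "('a::euclidean_space \<Rightarrow> 'a) \<Rightarrow> real mat" where
  "matF f = Matrix.mat DIM('a) DIM('a) (\<lambda>(i,j). f (ee j) \<bullet> ee i)"

lemma matF_carrier: "matF (f::'a::euclidean_space \<Rightarrow> 'a) \<in> carrier_mat DIM('a) DIM('a)"
  unfolding matF_def by simp

lemma dim_matF[simp]: "dim_row (matF (f::'a::euclidean_space \<Rightarrow> 'a)) = DIM('a)"
  "dim_col (matF (f::'a::euclidean_space \<Rightarrow> 'a)) = DIM('a)"
  unfolding matF_def by simp_all

lemma matF_index: "i < DIM('a) \<Longrightarrow> j < DIM('a) \<Longrightarrow> matF (f::'a::euclidean_space \<Rightarrow> 'a) $$ (i,j) = f (ee j) \<bullet> ee i"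
  unfolding matF_def by simp

lemma matF_comp:
  fixes f g :: "'a::euclidean_space \<Rightarrow> 'a"
  assumes lin: "linear f"
  shows "matF (f \<circ> g) = matF f * matF g"
proof (rule eq_matI)
  fix i j assume ij: "i < dim_row (matF f * matF g)" "j < dim_col (matF f * matF g)"
  then have i: "i < DIM('a)" and j: "j < DIM('a)" by auto
  have "(matF f * matF g) $$ (i,j) = (\<Sum>k=0..<DIM('a). (f (ee k) \<bullet> ee i) * (g (ee j) \<bullet> ee k))"
    using i j matF_carrier[of f] matF_carrier[of g]
    by (simp add: scalar_prod_def matF_index)
  also have "\<dots> = f (\<Sum>k=0..<DIM('a). (g (ee j) \<bullet> ee k) *\<^sub>R ee k) \<bullet> ee i"
    by (simp add: linear_sum[OF lin] linear_scale[OF lin] inner_sum_left mult.commute)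
  also have "\<dots> = f (g (ee j)) \<bullet> ee i" using ee_repr[of "g (ee j)"] by simp
  also have "\<dots> = matF (f \<circ> g) $$ (i,j)" using i j by (simp add: matF_index)
  finally show "matF (f \<circ> g) $$ (i, j) = (matF f * matF g) $$ (i, j)" by simp
qed auto

definition dt :: "('a::euclidean_space \<Rightarrow> 'a) \<Rightarrow> real" where
  "dt f = Determinant.det (matF f)"

lemma dt_comp: "linear f \<Longrightarrow> dt (f \<circ> g) = dt f * dt g"
  unfolding dt_def by (simp add: matF_comp det_mult[OF matF_carrier matF_carrier])

definition diagm :: "real \<Rightarrow> real \<Rightarrow> 'a::euclidean_space \<Rightarrow> 'a" where
  "diagm a b x = a *\<^sub>R ((x \<bullet> ee 0) *\<^sub>R ee 0) + b *\<^sub>R (x - (x \<bullet> ee 0) *\<^sub>R ee 0)"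

lemma linear_diagm: "linear (diagm a b)"
  unfolding diagm_def by (rule linearI) (simp_all add: inner_add_left algebra_simps)

lemma dt_diagm: "dt (diagm a b :: 'a::euclidean_space \<Rightarrow> 'a) = a * b ^ (DIM('a) - 1)"
proof -
  let ?d = "DIM('a)"
  have d: "0 < ?d" by simp
  have ent: "matF (diagm a b :: 'a \<Rightarrow> 'a) $$ (i,j) = (if i = j then (if i = 0 then a else b) else 0)"
    if "i < ?d" "j < ?d" for i j
    using that d by (auto simp: matF_index diagm_def inner_diff_left ee_inner)
  have ut: "upper_triangular (matF (diagm a b :: 'a \<Rightarrow> 'a))"
    by (auto simp: upper_triangular_def ent)
  have "dt (diagm a b :: 'a \<Rightarrow> 'a) = prod_list (diag_mat (matF (diagm a b :: 'a \<Rightarrow> 'a)))"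
    unfolding dt_def by (rule det_upper_triangular[OF ut matF_carrier])
  also have "diag_mat (matF (diagm a b :: 'a \<Rightarrow> 'a)) = map (\<lambda>i. if i = 0 then a else b) [0..<?d]"
    by (auto simp: diag_mat_def ent intro!: map_cong)
  also have "\<dots> = a # map (\<lambda>i. b) [1..<?d]"
    using d by (auto simp: upt_conv_Cons[OF d] intro!: map_cong)
  also have "prod_list \<dots> = a * b ^ (?d - 1)" by (simp add: map_replicate_const)
  finally show ?thesis .
qed

lemma dt_formula:
  "dt (f::'a::euclidean_space \<Rightarrow> 'a) = (\<Sum>p | p permutes {0..<DIM('a)}.
     of_int (sign p) * (\<Prod>i = 0..<DIM('a). f (ee (p i)) \<bullet> ee i))"
  unfolding dt_def det_def'[OF matF_carrier]
  by (intro sum.cong refl arg_cong2[where f="(*)"] prod.cong)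
     (auto simp: matF_index permutes_in_image)

lemma dt_continuous:
  "continuous_on UNIV (\<lambda>T::'a::euclidean_space \<Rightarrow>\<^sub>L 'a. dt (blinfun_apply T))"
  unfolding dt_formula
  by (intro continuous_intros continuous_on_blinfun_matrix continuous_on_id)




lemma ev_pos:
  fixes g :: "real \<Rightarrow> real"
  assumes "(g \<longlongrightarrow> g 0) (at_right 0)" "g 0 > 0"
  shows "\<forall>\<^sub>F \<eta> in at_right 0. g \<eta> > 0"
  using order_tendstoD(1)[OF assms(1) assms(2)] .

lemma params:
  fixes t :: real and d :: nat
  assumes d: "d \<ge> 1" and t: "t > sqrt d"
  shows "\<exists>a b k m. 0 < b \<and> b \<le> 1 \<and> 0 \<le> k \<and> k \<le> 1 \<and> a = m + k * t \<and>
     k\<^sup>2 + b\<^sup>2 - m\<^sup>2 > 0 \<and> k\<^sup>2 \<le> (k\<^sup>2 + b\<^sup>2 - m\<^sup>2) * (1 - b\<^sup>2) \<and> a * b ^ (d - 1) > 1"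
proof -
  have s0: "sqrt (real d) \<ge> 0" by simp
  have t0: "t > 0" using t s0 by linarith
  have t2: "t\<^sup>2 > d"
  proof -
    have "(sqrt d)\<^sup>2 < t\<^sup>2" by (rule power_strict_mono[OF t s0]) auto
    then show ?thesis by simp
  qed
  define \<rho> where "\<rho> = (t\<^sup>2 - d) / 2"
  define \<theta> where "\<theta> = 1 + t\<^sup>2 + \<rho>"
  define c where "c = t\<^sup>2 - 1 - \<rho>"
  have \<rho>: "\<rho> > 0" using t2 by (simp add: \<rho>_def)
  have c: "c \<ge> 0" using t2 d by (simp add: c_def \<rho>_def)
  define P1 where "P1 \<eta> = 2 * \<theta> - 2 + \<eta> * (4 * t\<^sup>2 + 1 - \<theta>\<^sup>2)" for \<eta>
  have ev1: "\<forall>\<^sub>F \<eta> in at_right 0. (\<lambda>\<eta>. 1 - 2 * t * \<eta>) \<eta> > 0"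
    by (rule ev_pos) (auto intro!: tendsto_eq_intros)
  have ev2: "\<forall>\<^sub>F \<eta> in at_right 0. (\<lambda>\<eta>::real. 1/2 - \<eta>) \<eta> > 0"
    by (rule ev_pos) (auto intro!: tendsto_eq_intros)
  have ev3: "\<forall>\<^sub>F \<eta> in at_right 0. (\<lambda>\<eta>. P1 \<eta>) \<eta> > 0"
    using t0 \<rho> by (intro ev_pos) (auto simp: P1_def \<theta>_def intro!: tendsto_eq_intros add_pos_nonneg)
  have ev4: "\<forall>\<^sub>F \<eta> in at_right 0. (\<lambda>\<eta>. P1 \<eta> * (2 - \<eta>) - 4 * t\<^sup>2) \<eta> > 0"
    by (rule ev_pos) (auto simp: P1_def \<theta>_def \<rho> intro!: tendsto_eq_intros)
  have ev5: "\<forall>\<^sub>F \<eta> in at_right 0. (\<lambda>\<eta>. \<rho> - c * (d - 1) * \<eta>) \<eta> > 0"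
    by (rule ev_pos) (auto simp: \<rho> intro!: tendsto_eq_intros)
  have "\<forall>\<^sub>F \<eta> in at_right 0. 0 < \<eta> \<and> 1 - 2 * t * \<eta> > 0 \<and> 1/2 - \<eta> > 0 \<and> P1 \<eta> > 0 \<and>
          P1 \<eta> * (2 - \<eta>) - 4 * t\<^sup>2 > 0 \<and> \<rho> - c * (d - 1) * \<eta> > 0"
    using eventually_at_right_less ev1 ev2 ev3 ev4 ev5 by eventually_elim auto
  then obtain \<eta> where \<eta>: "0 < \<eta>" "1 - 2 * t * \<eta> > 0" "1/2 - \<eta> > 0" "P1 \<eta> > 0"
    "P1 \<eta> * (2 - \<eta>) - 4 * t\<^sup>2 > 0" "\<rho> - c * (d - 1) * \<eta> > 0"
    using eventually_happens[of _ "at_right (0::real)"] by (auto simp: trivial_limit_at_right_real)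
  define b where "b = 1 - \<eta>"
  define k where "k = 2 * t * \<eta>"
  define m where "m = 1 - \<theta> * \<eta>"
  define a where "a = m + k * t"
  have Aq: "k\<^sup>2 + b\<^sup>2 - m\<^sup>2 = \<eta> * P1 \<eta>"
    by (simp add: k_def b_def m_def P1_def power2_eq_square algebra_simps)
  have a: "a = 1 + c * \<eta>"
    by (simp add: a_def m_def k_def \<theta>_def c_def power2_eq_square algebra_simps)
  have "(k\<^sup>2 + b\<^sup>2 - m\<^sup>2) * (1 - b\<^sup>2) - k\<^sup>2 = \<eta>\<^sup>2 * (P1 \<eta> * (2 - \<eta>) - 4 * t\<^sup>2)"
    unfolding Aq by (simp add: k_def b_def power2_eq_square algebra_simps)
  moreover have "\<eta>\<^sup>2 * (P1 \<eta> * (2 - \<eta>) - 4 * t\<^sup>2) > 0" using \<eta> by simp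
  ultimately have cond: "k\<^sup>2 \<le> (k\<^sup>2 + b\<^sup>2 - m\<^sup>2) * (1 - b\<^sup>2)" by linarith
  have bern: "1 + real (d - 1) * (- \<eta>) \<le> b ^ (d - 1)"
    unfolding b_def using Bernoulli_inequality[of "- \<eta>" "d - 1"] \<eta> by simp
  have "1 < 1 + \<eta> * (\<rho> - c * (d - 1) * \<eta>)" using \<eta> by simp
  also have "1 + \<eta> * (\<rho> - c * (d - 1) * \<eta>) = (1 + c * \<eta>) * (1 + real (d - 1) * (- \<eta>))"
    using d by (simp add: \<rho>_def c_def of_nat_diff power2_eq_square field_simps)
  also have "\<dots> \<le> a * b ^ (d - 1)"
    unfolding a using bern c \<eta> by (intro mult_left_mono) auto
  finally have det: "a * b ^ (d - 1) > 1" .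
  show ?thesis
    using \<eta> t0 cond det Aq
    by (intro exI[of _ a] exI[of _ b] exI[of _ k] exI[of _ m])
       (auto simp: b_def k_def a_def)
qed



lemma geo:
  fixes Nn :: "'a::euclidean_space \<Rightarrow> real" and e0 :: 'a
  assumes tri: "\<And>x y. Nn (x + y) \<le> Nn x + Nn y"
    and hom: "\<And>c x. Nn (c *\<^sub>R x) = \<bar>c\<bar> * Nn x"
    and le: "\<And>x. Nn x \<le> norm x"
    and e0: "norm e0 = 1" and ty: "Nn (t *\<^sub>R e0) \<le> 1"
    and a: "a = m + k * t" and k: "0 \<le> k" "k \<le> 1"
    and Aq: "k\<^sup>2 + b\<^sup>2 - m\<^sup>2 > 0" and cond: "k\<^sup>2 \<le> (k\<^sup>2 + b\<^sup>2 - m\<^sup>2) * (1 - b\<^sup>2)"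
  shows "Nn (a *\<^sub>R ((x \<bullet> e0) *\<^sub>R e0) + b *\<^sub>R (x - (x \<bullet> e0) *\<^sub>R e0)) \<le> norm x"
proof -
  define s where "s = x \<bullet> e0"
  define w where "w = x - s *\<^sub>R e0"
  define v where "v = (m * s) *\<^sub>R e0 + b *\<^sub>R w"
  define r where "r = norm x"
  define A where "A = k\<^sup>2 + b\<^sup>2 - m\<^sup>2"
  have ee: "e0 \<bullet> e0 = 1" using e0 by (simp add: power2_norm_eq_inner[symmetric])
  have we: "w \<bullet> e0 = 0" unfolding w_def s_def using ee by (simp add: inner_diff_left)
  have ew: "e0 \<bullet> w = 0" using we by (simp add: inner_commute)
  have x: "x = s *\<^sub>R e0 + w" unfolding w_def by simp
  have r2: "r\<^sup>2 = s\<^sup>2 + (norm w)\<^sup>2"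
    unfolding r_def power2_norm_eq_inner
    by (subst (1 2) x) (simp add: inner_add_left inner_add_right we ew ee power2_eq_square)
  have v2: "(norm v)\<^sup>2 = m\<^sup>2 * s\<^sup>2 + b\<^sup>2 * (norm w)\<^sup>2"
    unfolding v_def power2_norm_eq_inner
    by (simp add: inner_add_left inner_add_right we ew ee power2_eq_square algebra_simps)
  have D: "a *\<^sub>R ((x \<bullet> e0) *\<^sub>R e0) + b *\<^sub>R (x - (x \<bullet> e0) *\<^sub>R e0) = (k * s) *\<^sub>R (t *\<^sub>R e0) + v"
    unfolding v_def w_def s_def a by (simp add: algebra_simps)
  have sr: "\<bar>s\<bar> \<le> r"
    unfolding s_def r_def using Cauchy_Schwarz_ineq2[of x e0] e0 by simp
  have r0: "r \<ge> 0" unfolding r_def by simp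
  have nn: "Nn z \<ge> 0" for z
    using tri[of z "-z"] hom[of "-1" z] by (simp add: hom[of 0, simplified])
  have Apos: "A > 0" using Aq unfolding A_def .
  have key: "A * ((r - k * \<bar>s\<bar>)\<^sup>2 - (norm v)\<^sup>2) = (A * \<bar>s\<bar> - k * r)\<^sup>2 + (A * (1 - b\<^sup>2) - k\<^sup>2) * r\<^sup>2"
    unfolding v2 using r2 unfolding A_def
    by (simp add: power2_eq_square algebra_simps power2_abs[symmetric])
  have "0 \<le> (A * \<bar>s\<bar> - k * r)\<^sup>2 + (A * (1 - b\<^sup>2) - k\<^sup>2) * r\<^sup>2"
    using cond unfolding A_def by (intro add_nonneg_nonneg mult_nonneg_nonneg) auto
  then have "0 \<le> (r - k * \<bar>s\<bar>)\<^sup>2 - (norm v)\<^sup>2"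
    using key Apos by (metis zero_le_mult_iff not_le)
  moreover have "0 \<le> r - k * \<bar>s\<bar>"
    using mult_mono[OF k(2) sr] k by simp
  ultimately have vle: "norm v \<le> r - k * \<bar>s\<bar>"
    using power2_le_imp_le[of "norm v" "r - k * \<bar>s\<bar>"] by linarith
  have "Nn ((k * s) *\<^sub>R (t *\<^sub>R e0) + v) \<le> \<bar>k * s\<bar> * Nn (t *\<^sub>R e0) + norm v"
    using tri[of "(k * s) *\<^sub>R (t *\<^sub>R e0)" v] hom le[of v] by (simp del: scaleR_scaleR)
  also have "\<dots> \<le> \<bar>k * s\<bar> * 1 + norm v"
    using ty by (intro add_right_mono mult_left_mono) auto
  also have "\<dots> \<le> r" using vle k by (simp add: abs_mult)
  finally show ?thesis unfolding D r_def .
qed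



definition hh :: "'a::euclidean_space \<Rightarrow> 'a \<Rightarrow> 'a" where
  "hh w x = x - (2 * (x \<bullet> w) / (w \<bullet> w)) *\<^sub>R w"

lemma hh_linear: "linear (hh w)"
  unfolding hh_def by (rule linearI) (simp_all add: inner_add_left algebra_simps add_divide_distrib)

lemma hh_invol: "hh w (hh w x) = x"
proof (cases "w = 0")
  case True then show ?thesis by (simp add: hh_def)
next
  case False
  then have ww: "w \<bullet> w \<noteq> 0" by simp
  have "hh w x \<bullet> w = - (x \<bullet> w)" unfolding hh_def using ww by (simp add: inner_diff_left)
  then show ?thesis unfolding hh_def[of w "hh w x"] using ww by (simp add: hh_def)
qed

lemma hh_norm: "norm (hh w x) = norm x"
proof (cases "w = 0")
  case True then show ?thesis by (simp add: hh_def)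
next
  case False
  then have ww: "w \<bullet> w \<noteq> 0" by simp
  have "(norm (hh w x))\<^sup>2 = (norm x)\<^sup>2"
    unfolding power2_norm_eq_inner hh_def using ww
    by (simp add: inner_diff_left inner_diff_right inner_commute field_simps power2_eq_square)
  then show ?thesis by (simp add: power2_eq_iff_nonneg)
qed

lemma hh_map:
  assumes "norm y = t" "norm e0 = 1" "t > 0"
  shows "hh (y - t *\<^sub>R e0) y = t *\<^sub>R e0"
proof (cases "y - t *\<^sub>R e0 = 0")
  case True then show ?thesis by (simp add: hh_def)
next
  case False
  let ?w = "y - t *\<^sub>R e0"
  have yy: "y \<bullet> y = t\<^sup>2" using assms(1) by (simp add: power2_norm_eq_inner[symmetric])
  have ee: "e0 \<bullet> e0 = 1" using assms(2) by (simp add: power2_norm_eq_inner[symmetric])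
  have ww: "?w \<bullet> ?w \<noteq> 0" using False by simp
  have eq: "2 * (y \<bullet> ?w) = ?w \<bullet> ?w"
    using yy ee by (simp add: inner_diff_left inner_diff_right inner_commute power2_eq_square algebra_simps)
  have one: "2 * (y \<bullet> ?w) / (?w \<bullet> ?w) = 1" using ww by (simp only: eq) simp
  have "hh ?w y = y - 1 *\<^sub>R ?w" unfolding hh_def by (simp only: one)
  then show ?thesis by simp
qed




lemma john:
  fixes N :: "'a::euclidean_space \<Rightarrow> real"
  assumes nN: "is_norm N"
  shows "\<exists>A::'a \<Rightarrow> 'a. linear A \<and> (\<forall>x. N x \<le> norm (A x)) \<and> (\<forall>x. norm (A x) \<le> sqrt (real DIM('a)) * N x)"
proof -
  let ?d = "DIM('a)"
  obtain c where c: "c > 0" "\<And>x. c * norm x \<le> N x" using norm_lower[OF nN] by blast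
  define C where "C = (\<Sum>b\<in>Basis. N b) + 1"
  have C: "C > 0" using is_normD(6)[OF nN] by (simp add: C_def add_nonneg_pos sum_nonneg)
  have NC: "N x \<le> C * norm x" for x
    using norm_upper[OF nN, of x] norm_ge_zero[of x] unfolding C_def distrib_right mult_1 by linarith
  have Nnn: "N x \<ge> 0" for x using is_normD(6)[OF nN] .
  have Nlin: "N (f x) \<le> N (f y) + N (f z)" if "linear f" "x = y + z" for f :: "'a \<Rightarrow> 'a" and x y z
    using that is_normD(3)[OF nN] by (simp add: linear_add)
  define F where "F = {T::'a \<Rightarrow>\<^sub>L 'a. \<forall>x. N (blinfun_apply T x) \<le> norm x}"
  have contN: "continuous_on UNIV N" by (rule norm_continuous[OF nN])
  have compF: "compact F"
    unfolding compact_eq_bounded_closed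
  proof
    show "bounded F"
    proof (rule boundedI)
      fix T assume "T \<in> F"
      have "norm (blinfun_apply T x) \<le> (1 / c) * norm x" for x
        using c(2)[of "blinfun_apply T x"] \<open>T \<in> F\<close> c(1) unfolding F_def
        by (auto simp: field_simps intro: order_trans)
      then show "norm T \<le> 1 / c" using c(1) by (intro norm_blinfun_bound) auto
    qed
    have "closed {T::'a \<Rightarrow>\<^sub>L 'a. N (blinfun_apply T x) \<le> norm x}" for x
    proof (rule closed_Collect_le)
      have "continuous_on UNIV (\<lambda>T::'a \<Rightarrow>\<^sub>L 'a. blinfun_apply T x)"
        by (intro linear_continuous_on bounded_bilinear.bounded_linear_left[OF bounded_bilinear_blinfun_apply])
      then show "continuous_on UNIV (\<lambda>T::'a \<Rightarrow>\<^sub>L 'a. N (blinfun_apply T x))"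
        using continuous_on_compose2[OF contN] by blast
    qed (rule continuous_on_const)
    then show "closed F" unfolding F_def by (rule closed_Collect_all)
  qed
  define \<epsilon> where "\<epsilon> = 1 / C"
  have eps: "\<epsilon> > 0" using C by (simp add: \<epsilon>_def)
  have diag_eps: "diagm \<epsilon> \<epsilon> x = \<epsilon> *\<^sub>R x" for x :: 'a
    by (simp add: diagm_def algebra_simps)
  have blD: "bounded_linear (diagm \<epsilon> \<epsilon> :: 'a \<Rightarrow> 'a)"
    using linear_diagm linear_conv_bounded_linear by blast
  define T0 where "T0 = Blinfun (diagm \<epsilon> \<epsilon> :: 'a \<Rightarrow> 'a)"
  have T0F: "T0 \<in> F"
  proof -
    have "N (diagm \<epsilon> \<epsilon> x) \<le> norm x" for x :: 'a
    proof -
      have "N (diagm \<epsilon> \<epsilon> x) = \<epsilon> * N x" using eps is_normD(4)[OF nN] by (simp add: diag_eps)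
      also have "\<dots> \<le> \<epsilon> * (C * norm x)" using eps NC by (intro mult_left_mono) auto
      also have "\<dots> = norm x" using C by (simp add: \<epsilon>_def)
      finally show ?thesis .
    qed
    then show ?thesis by (simp add: F_def T0_def bounded_linear_Blinfun_apply[OF blD])
  qed
  have dtT0: "dt (blinfun_apply T0) > 0"
    unfolding T0_def bounded_linear_Blinfun_apply[OF blD] dt_diagm using eps by simp
  have Fne: "F \<noteq> {}" using T0F by blast
  have contF: "continuous_on F (\<lambda>S::'a \<Rightarrow>\<^sub>L 'a. dt (blinfun_apply S))"
    using continuous_on_subset[OF dt_continuous] by blast
  obtain T where TF: "T \<in> F" and Tmax: "\<And>S. S \<in> F \<Longrightarrow> dt (blinfun_apply S) \<le> dt (blinfun_apply T)"
    using continuous_attains_sup[OF compF Fne contF] by blast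
  define f where "f = blinfun_apply T"
  have dtf: "dt f > 0" using Tmax[OF T0F] dtT0 unfolding f_def by linarith
  have linf: "linear f" unfolding f_def
    using blinfun.bounded_linear_right linear_conv_bounded_linear by blast
  have fF: "N (f x) \<le> norm x" for x using TF unfolding F_def f_def by auto
  have claim: "norm y \<le> sqrt (real ?d) * N (f y)" for y
  proof (rule ccontr)
    assume "\<not> ?thesis"
    then have ylt: "sqrt (real ?d) * N (f y) < norm y" by simp
    have s0: "sqrt (real ?d) \<ge> 0" by simp
    obtain t where t: "t > sqrt (real ?d)" "t * N (f y) \<le> norm y"
    proof (cases "N (f y) = 0")
      case True then show ?thesis using that[of "sqrt (real ?d) + 1"] by simp
    next
      case False
      then have Np: "N (f y) > 0" using Nnn[of "f y"] by simp
      define Q where "Q = norm y / N (f y)"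
      have q: "sqrt (real ?d) < Q" using ylt Np by (simp add: Q_def field_simps)
      show ?thesis
      proof (rule that[of "(sqrt (real ?d) + Q) / 2"])
        show "(sqrt (real ?d) + Q) / 2 > sqrt (real ?d)" using q by (simp add: field_simps)
        have "(sqrt (real ?d) + Q) / 2 \<le> Q" using q by (simp add: field_simps)
        then show "(sqrt (real ?d) + Q) / 2 * N (f y) \<le> norm y"
          using Np by (simp add: Q_def pos_le_divide_eq)
      qed
    qed
    have t0: "t > 0" using t(1) s0 by linarith
    have "norm y > 0" using ylt mult_nonneg_nonneg[OF s0 Nnn[of "f y"]] by linarith
    then have y0: "y \<noteq> 0" by auto
    define y1 where "y1 = (t / norm y) *\<^sub>R y"
    have ny1: "norm y1 = t" using y0 t0 by (simp add: y1_def)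
    have Ny1: "N (f y1) \<le> 1"
    proof -
      have "N (f y1) = (t / norm y) * N (f y)"
        using t0 y0 is_normD(4)[OF nN] by (simp add: y1_def linear_scale[OF linf])
      also have "\<dots> \<le> 1" using t(2) y0 by (simp add: field_simps)
      finally show ?thesis .
    qed
    define e0 :: 'a where "e0 = ee 0"
    have e0: "norm e0 = 1" unfolding e0_def using ee_Basis[where 'a='a, of 0] by (simp add: norm_Basis)
    define H where "H = hh (y1 - t *\<^sub>R e0)"
    have linH: "linear H" unfolding H_def by (rule hh_linear)
    have HH: "H (H x) = x" for x unfolding H_def by (rule hh_invol)
    have Hn: "norm (H x) = norm x" for x unfolding H_def by (rule hh_norm)
    have Hy: "H y1 = t *\<^sub>R e0" unfolding H_def by (rule hh_map[OF ny1 e0 t0])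
    obtain a b k m where p: "0 < b" "b \<le> 1" "0 \<le> k" "k \<le> 1" "a = m + k * t"
      "k\<^sup>2 + b\<^sup>2 - m\<^sup>2 > 0" "k\<^sup>2 \<le> (k\<^sup>2 + b\<^sup>2 - m\<^sup>2) * (1 - b\<^sup>2)" "a * b ^ (?d - 1) > 1"
      using params[of ?d t] t(1) by (auto simp: DIM_positive Suc_le_eq)
    define S where "S = f \<circ> (H \<circ> (diagm a b \<circ> H))"
    have linS: "linear S" unfolding S_def
      by (intro linear_compose linH linear_diagm linf)
    have blS: "bounded_linear S" using linS linear_conv_bounded_linear by blast
    have SF: "Blinfun S \<in> F"
    proof -
      have "N (S x) \<le> norm x" for x
      proof -
        define Nn where "Nn v = N (f (H v))" for v
        have "Nn (diagm a b (H x)) \<le> norm (H x)"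
          unfolding diagm_def e0_def[symmetric]
        proof (rule geo[where t=t and m=m and k=k])
          show "Nn (x + y) \<le> Nn x + Nn y" for x y
            unfolding Nn_def using is_normD(3)[OF nN] by (simp add: linear_add[OF linH] linear_add[OF linf])
          show "Nn (c *\<^sub>R x) = \<bar>c\<bar> * Nn x" for c x
            unfolding Nn_def using is_normD(4)[OF nN] by (simp add: linear_scale[OF linH] linear_scale[OF linf])
          show "Nn x \<le> norm x" for x unfolding Nn_def using fF[of "H x"] Hn[of x] by simp
          show "Nn (t *\<^sub>R e0) \<le> 1" unfolding Nn_def Hy[symmetric] HH using Ny1 .
        qed (use e0 p in auto)
        then show ?thesis unfolding Nn_def S_def using Hn[of x] by simp
      qed
      then show ?thesis by (simp add: F_def bounded_linear_Blinfun_apply[OF blS])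
    qed
    have HHd: "H \<circ> H = diagm 1 1" by (rule ext) (simp add: HH diagm_def)
    have dtHH: "dt H * dt H = 1"
      using dt_comp[OF linH, of H] unfolding HHd dt_diagm by simp
    have "dt S = dt f * (dt H * dt H) * dt (diagm a b :: 'a \<Rightarrow> 'a)"
      unfolding S_def dt_comp[OF linf] dt_comp[OF linH] dt_comp[OF linear_diagm] by (simp add: algebra_simps)
    also have "\<dots> = dt f * (a * b ^ (?d - 1))" using dtHH by (simp add: dt_diagm)
    also have "\<dots> > dt f" using dtf p(8) by simp
    finally have "dt S > dt f" .
    moreover have "dt S \<le> dt f"
      using Tmax[OF SF] unfolding bounded_linear_Blinfun_apply[OF blS] f_def .
    ultimately show False by simp
  qed
  have injf: "inj f"
  proof (rule injI)
    fix x y assume "f x = f y"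
    then have "f (x - y) = 0" by (simp add: linear_diff[OF linf])
    then have "norm (x - y) \<le> 0" using claim[of "x - y"] is_normD(1)[OF nN] by simp
    then show "x = y" by simp
  qed
  have "surj f" by (rule linear_injective_imp_surjective[OF linf injf]) simp
  then obtain g where g: "linear g" "f \<circ> g = id" using linear_surjective_right_inverse[OF linf] by blast
  have fg: "f (g x) = x" for x using g(2) by (metis comp_apply id_apply)
  have l1: "\<forall>x. N x \<le> norm (g x)" using fF fg by metis
  have l2: "\<forall>x. norm (g x) \<le> sqrt (real ?d) * N x" using claim fg by metis
  show ?thesis using g(1) l1 l2 by blast
qed


theorem corollary4:
  fixes M :: "'b measure"
    and N :: "'a::euclidean_space \<Rightarrow> real"
    and X :: "nat \<Rightarrow> 'b \<Rightarrow> 'a"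
    and n :: nat
  assumes "prob_space M"
    and "is_norm N"
    and "\<And>i. i \<in> {1..n} \<Longrightarrow> X i \<in> borel_measurable M"
    and "prob_space.indep_vars M (\<lambda>_. borel) X {1..n}"
    and "\<And>i. i \<in> {1..n} \<Longrightarrow> integrable M (X i)"
    and "\<And>i. i \<in> {1..n} \<Longrightarrow> (\<integral>\<omega>. X i \<omega> \<partial>M) = 0"
    and "\<And>i. i \<in> {1..n} \<Longrightarrow> integrable M (\<lambda>\<omega>. (N (X i \<omega>))\<^sup>2)"
  shows "(\<integral>\<omega>. (N (\<Sum>i=1..n. X i \<omega>))\<^sup>2 \<partial>M)
           \<le> real DIM('a) * (\<Sum>i=1..n. \<integral>\<omega>. (N (X i \<omega>))\<^sup>2 \<partial>M)"
proof -
  obtain A :: "'a \<Rightarrow> 'a" where A: "linear A" "\<And>x. N x \<le> norm (A x)"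
    "\<And>x. norm (A x) \<le> sqrt (real DIM('a)) * N x"
    using john[OF assms(2)] by blast
  show ?thesis
    by (rule reduction[OF assms A])
qed

end
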